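(* Let $p < q < r$ be primes such that $\{p, q, r\}$ is a symmetric triple. Then $q \leq \frac{3p-1}{2}$, and either $r = 2p-1$ or $q < r \leq \frac{3p-1}{2}$.
   Context: Two distinct primes $p$ and $q$ form a symmetric pair if $\gcd(p-1, q-1) = |p-q|$. A symmetric triple is a set of three primes such that any two of them form a symmetric pair. *)

theory Defs
  imports Complex_Main "HOL-Computational_Algebra.Primes"
begin

definition symmetric_pair :: "nat \<Rightarrow> nat \<Rightarrow> bool" where
  "symmetric_pair p q \<longleftrightarrow> prime p \<and> prime q \<and> p \<noteq> q \<and>
     int (gcd (p - 1) (q - 1)) = \<bar>int p - int q\<bar>"

definition symmetric_triple :: "nat set \<Rightarrow> bool" where
  "symmetric_triple S \<longleftrightarrow> card S = 3 \<and> (\<forall>p\<in>S. prime p) \<and>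
     (\<forall>p\<in>S. \<forall>q\<in>S. p \<noteq> q \<longrightarrow> symmetric_pair p q)"

end

theory Submission
  imports Defs
begin

lemma pair_dvd:
  assumes "symmetric_pair a b" "a < b"
  shows "(b - a) dvd (a - 1)"
proof -
  have "int (gcd (a - 1) (b - 1)) = int (b - a)" using assms unfolding symmetric_pair_def by auto
  hence "gcd (a - 1) (b - 1) = b - a" by linarith
  thus ?thesis by (metis gcd_dvd1)
qed

lemma dvd_half:
  fixes d n :: nat
  assumes "d dvd n" "d \<noteq> n" "0 < n"
  shows "2 * d \<le> n"
proof -
  obtain k where k: "n = d * k" using assms(1) by blast
  have "k \<noteq> 0" using k assms by auto
  moreover have "k \<noteq> 1" using k assms by auto
  ultimately have "k \<ge> 2" by linarith
  thus ?thesis using k by (metis mult.commute mult_le_mono2)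
qed

theorem corollary1:
  fixes p q r :: nat
  assumes "prime p" "prime q" "prime r" "p < q" "q < r"
    and "symmetric_triple {p, q, r}"
  shows "real q \<le> (3 * real p - 1) / 2 \<and>
         (r = 2 * p - 1 \<or> (q < r \<and> real r \<le> (3 * real p - 1) / 2))"
proof -
  have p2: "p \<ge> 2" using assms(1) prime_ge_2_nat by blast
  have spq: "symmetric_pair p q" and spr: "symmetric_pair p r"
    using assms(4,5,6) unfolding symmetric_triple_def by auto
  have d1: "(q - p) dvd (p - 1)" using pair_dvd[OF spq assms(4)] .
  have d2: "(r - p) dvd (p - 1)" using pair_dvd[OF spr] assms by simp
  have "r - p \<le> p - 1" using d2 p2 by (intro dvd_imp_le) auto
  hence "q - p \<noteq> p - 1" using assms by linarith
  hence "2 * (q - p) \<le> p - 1" using dvd_half[OF d1] p2 by auto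
  hence "2 * q \<le> 3 * p - 1" using assms p2 by linarith
  hence "real (2 * q) \<le> real (3 * p - 1)" by linarith
  hence A: "real q \<le> (3 * real p - 1) / 2" using p2 by (simp add: of_nat_diff)
  have "r = 2 * p - 1 \<or> 2 * (r - p) \<le> p - 1"
    using dvd_half[OF d2] p2 assms by fastforce
  hence "r = 2 * p - 1 \<or> 2 * r \<le> 3 * p - 1" using assms p2 by linarith
  hence "r = 2 * p - 1 \<or> real (2 * r) \<le> real (3 * p - 1)" by linarith
  hence "r = 2 * p - 1 \<or> real r \<le> (3 * real p - 1) / 2" using p2 by (auto simp add: of_nat_diff)
  thus ?thesis using A assms by auto
qed

end
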